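(* Let $L$ be a sharp C-lattice. (i) If $x,y\in L$ are join principal elements with $(x:y)\vee(y:x)=x\vee y$, then $x\vee y=1$. (ii) If $L$ has a unique maximal element $m$ and $m=x_1\vee\cdots\vee x_n$ with $x_1,\dots,x_n$ join principal elements, then $m=x_i$ for some $i$.
   Context: A multiplicative lattice is a complete lattice $(L,\le)$ with bottom $0$ and top $1$ which is also a commutative monoid with identity $1$ such that $a(\bigvee_\alpha b_\alpha)=\bigvee_\alpha(ab_\alpha)$ for all $a,b_\alpha\in L$. For $x,y\in L$, $(y:x)=\bigvee\{a\in L: ax\le y\}$. An element $c$ is compact if $c\le\bigvee S$ implies $c\le\bigvee T$ for some finite $T\subseteq S$. A C-lattice is a multiplicative lattice in which $1$ is compact, the product of two compact elements is compact, and every element is a join of compact elements. A maximal element is a maximal element of $L\setminus\{1\}$. An element $x$ is join principal if $y\vee(z:x)=((yx\vee z):x)$ for all $y,z\in L$. $L$ is sharp if whenever $a_1a_2\le b$ with $a_1,a_2,b\in L$, there exist $b_1,b_2\in L$ with $a_i\le b_i$ ($i=1,2$) and $b=b_1b_2$. *)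

theory Defs
  imports Main
begin

definition mult_lattice :: "('a::complete_lattice \<Rightarrow> 'a \<Rightarrow> 'a) \<Rightarrow> bool" where
  "mult_lattice mult \<longleftrightarrow>
     (\<forall>a b c. mult (mult a b) c = mult a (mult b c)) \<and>
     (\<forall>a b. mult a b = mult b a) \<and>
     (\<forall>a. mult a top = a) \<and>
     (\<forall>a B. mult a (Sup B) = Sup (mult a ` B))"

definition lcolon :: "('a::complete_lattice \<Rightarrow> 'a \<Rightarrow> 'a) \<Rightarrow> 'a \<Rightarrow> 'a \<Rightarrow> 'a" where
  "lcolon mult y x = Sup {a. mult a x \<le> y}"

definition lcompact :: "'a::complete_lattice \<Rightarrow> bool" where
  "lcompact c \<longleftrightarrow> (\<forall>S. c \<le> Sup S \<longrightarrow> (\<exists>T. T \<subseteq> S \<and> finite T \<and> c \<le> Sup T))"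

definition C_lattice :: "('a::complete_lattice \<Rightarrow> 'a \<Rightarrow> 'a) \<Rightarrow> bool" where
  "C_lattice (mult::'a \<Rightarrow> 'a \<Rightarrow> 'a) \<longleftrightarrow> mult_lattice mult \<and> lcompact (top::'a) \<and>
     (\<forall>a b. lcompact a \<and> lcompact b \<longrightarrow> lcompact (mult a b)) \<and>
     (\<forall>x::'a. \<exists>S. (\<forall>c\<in>S. lcompact c) \<and> x = Sup S)"

definition lmaximal :: "'a::complete_lattice \<Rightarrow> bool" where
  "lmaximal m \<longleftrightarrow> m \<noteq> top \<and> (\<forall>x. m \<le> x \<and> x \<noteq> top \<longrightarrow> x = m)"

definition join_principal :: "('a::complete_lattice \<Rightarrow> 'a \<Rightarrow> 'a) \<Rightarrow> 'a \<Rightarrow> bool" where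
  "join_principal mult x \<longleftrightarrow>
     (\<forall>y z. sup y (lcolon mult z x) = lcolon mult (sup (mult y x) z) x)"

definition sharp :: "('a::complete_lattice \<Rightarrow> 'a \<Rightarrow> 'a) \<Rightarrow> bool" where
  "sharp mult \<longleftrightarrow> (\<forall>a1 a2 b. mult a1 a2 \<le> b \<longrightarrow>
     (\<exists>b1 b2. a1 \<le> b1 \<and> a2 \<le> b2 \<and> b = mult b1 b2))"

end

theory Submission
  imports Defs
begin

locale ml =
  fixes mult :: "'a::complete_lattice \<Rightarrow> 'a \<Rightarrow> 'a"
  assumes M: "mult_lattice mult"
begin

lemma assoc: "mult (mult a b) c = mult a (mult b c)"
  using M unfolding mult_lattice_def by blast
lemma comm: "mult a b = mult b a"
  using M unfolding mult_lattice_def by blast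
lemma unit_r[simp]: "mult a top = a"
  using M unfolding mult_lattice_def by blast
lemma unit_l[simp]: "mult top a = a"
  using comm unit_r by metis
lemma distr: "mult a (Sup B) = Sup (mult a ` B)"
  using M unfolding mult_lattice_def by blast
lemma distr_sup: "mult a (sup b c) = sup (mult a b) (mult a c)"
  using distr[of a "{b,c}"] by simp
lemma distr_sup_l: "mult (sup b c) a = sup (mult b a) (mult c a)"
  using distr_sup comm by metis
lemma mono_r: "b \<le> c \<Longrightarrow> mult a b \<le> mult a c"
  by (metis distr_sup sup.absorb_iff2 sup.cobounded1)
lemma mono_l: "b \<le> c \<Longrightarrow> mult b a \<le> mult c a"
  using mono_r comm by metis
lemma mono2: "a \<le> a' \<Longrightarrow> b \<le> b' \<Longrightarrow> mult a b \<le> mult a' b'"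
  by (meson mono_l mono_r order_trans)
lemma le_l: "mult a b \<le> a"
  using mono_r[of b top a] by simp
lemma le_r: "mult a b \<le> b"
  using mono_l[of a top b] by simp

lemma colonI: "mult a x \<le> y \<Longrightarrow> a \<le> lcolon mult y x"
  unfolding lcolon_def by (simp add: Sup_upper)
lemma colon_mult: "mult (lcolon mult y x) x \<le> y"
proof -
  have "mult (lcolon mult y x) x = Sup ((\<lambda>a. mult a x) ` {a. mult a x \<le> y})"
    unfolding lcolon_def using distr[of x] comm by (simp add: image_image)
  also have "\<dots> \<le> y" by (auto intro: Sup_least)
  finally show ?thesis .
qed
lemma colon_top: "lcolon mult y x = top \<Longrightarrow> x \<le> y"
  using colon_mult[of y x] by simp

lemma jp_eq: "join_principal mult x \<Longrightarrow> lcolon mult (sup (mult x x) y) x = sup x (lcolon mult y x)"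
  unfolding join_principal_def by metis

end

lemma part1:
  fixes mult :: "'a::complete_lattice \<Rightarrow> 'a \<Rightarrow> 'a"
  assumes M: "mult_lattice mult" and S: "sharp mult"
    and jx: "join_principal mult x" and jy: "join_principal mult y"
    and h: "sup (lcolon mult x y) (lcolon mult y x) = sup x y"
  shows "sup x y = top"
proof -
  interpret ml mult by (rule ml.intro[OF M])
  define s where "s = sup x y"
  have key: "mult s s = sup (mult u u) v"
    if ju: "join_principal mult u" and uv: "s = sup u v" and cv: "lcolon mult v u \<le> s" for u v
  proof -
    have ss': "mult s s = sup (sup (mult u u) (mult u v)) (sup (mult v u) (mult v v))"
      unfolding uv distr_sup distr_sup_l by (simp add: ac_simps)
    have "mult s s \<le> sup (mult u u) v"
      unfolding ss' using le_l[of v] le_r[of u v] le_l[of v u] by (simp add: le_supI2)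
    then obtain B C where B: "s \<le> B" and C: "s \<le> C" and w: "sup (mult u u) v = mult B C"
      using S unfolding sharp_def by blast
    have us: "u \<le> s" unfolding uv by simp
    have cw: "lcolon mult (sup (mult u u) v) u \<le> s"
      using jp_eq[OF ju, of v] cv us by simp
    have "mult C u \<le> sup (mult u u) v"
      unfolding w using mono_r[OF order_trans[OF us B], of C] comm by metis
    hence "C \<le> s" using colonI cw order_trans by blast
    hence C': "C = s" using C by simp
    have "mult B u \<le> sup (mult u u) v"
      unfolding w using mono_r[OF order_trans[OF us C], of B] by simp
    hence "B \<le> s" using colonI cw order_trans by blast
    hence "B = s" using B by simp
    with C' w show ?thesis by simp
  qed
  have by': "lcolon mult y x \<le> s" using h unfolding s_def by (metis sup.cobounded2)
  have ax: "lcolon mult x y \<le> s" using h unfolding s_def by (metis sup.cobounded1)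
  have k1: "mult s s = sup (mult x x) y" using key[OF jx _ by'] s_def by simp
  have k2: "mult s s = sup (mult y y) x" using key[OF jy _ ax] s_def by (simp add: sup_commute)
  have "x \<le> mult s s" using k2 by simp
  hence "x \<le> sup (mult x x) y" using k1 by simp
  hence "top \<le> lcolon mult (sup (mult x x) y) x" using colonI[of top x] by simp
  hence "top \<le> sup x (lcolon mult y x)" using jp_eq[OF jx] by simp
  also have "\<dots> \<le> s" using by' s_def by simp
  finally show ?thesis unfolding s_def by (simp add: top_le)
qed


lemma finite_chain_Sup:
  fixes T :: "'a::complete_lattice set"
  assumes "finite T" "T \<noteq> {}" "\<forall>a\<in>T. \<forall>b\<in>T. a \<le> b \<or> b \<le> a"
  shows "Sup T \<in> T"
  using assms
proof (induction T rule: finite_ne_induct)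
  case (singleton x) then show ?case by simp
next
  case (insert a F)
  have "Sup F \<in> F" using insert by blast
  hence "a \<le> Sup F \<or> Sup F \<le> a" using insert.prems by blast
  then show ?case using \<open>Sup F \<in> F\<close> by (auto simp: sup.absorb1 sup.absorb2)
qed

lemma exists_max:
  fixes mult :: "'a::complete_lattice \<Rightarrow> 'a \<Rightarrow> 'a" and c :: 'a
  assumes C: "C_lattice mult" and c: "c \<noteq> top"
  shows "\<exists>M. lmaximal M \<and> c \<le> M"
proof -
  have ct: "lcompact (top::'a)" using C unfolding C_lattice_def by blast
  define A where "A = {u::'a. c \<le> u \<and> u \<noteq> top}"
  have po: "partial_order_on A (relation_of (\<le>) A)"
    unfolding partial_order_on_def preorder_on_def refl_on_def trans_def antisym_def relation_of_def
    by auto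
  have "\<exists>m \<in> A. \<forall>a \<in> A. m \<le> a \<longrightarrow> a = m"
  proof (rule predicate_Zorn[OF po])
    fix Ch assume Ch: "Ch \<in> Chains (relation_of (\<le>) A)"
    have sub: "Ch \<subseteq> A" and tot: "\<forall>a\<in>Ch. \<forall>b\<in>Ch. a \<le> b \<or> b \<le> a"
      using Ch unfolding Chains_def relation_of_def by auto
    show "\<exists>u \<in> A. \<forall>a \<in> Ch. a \<le> u"
    proof (cases "Ch = {}")
      case True then show ?thesis using c A_def by auto
    next
      case False
      then obtain a0 where a0: "a0 \<in> Ch" by blast
      have "Sup Ch \<noteq> top"
      proof
        assume "Sup Ch = top"
        then obtain T where T: "T \<subseteq> Ch" "finite T" "top \<le> Sup T"
          using ct unfolding lcompact_def by (metis order_refl)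
        show False
        proof (cases "T = {}")
          case True
          hence tb: "(top::'a) = bot" using T by (simp add: bot_unique)
          have "c \<le> top" by simp
          hence "c = top" unfolding tb by (simp add: bot_unique)
          then show False using c by simp
        next
          case False
          have "Sup T \<in> T" using finite_chain_Sup[OF T(2) False] tot T(1) by blast
          hence "Sup T \<in> A" using sub T(1) by blast
          then show False using T(3) A_def by (simp add: top_le)
        qed
      qed
      moreover have "c \<le> Sup Ch"
      proof -
        have "c \<le> a0" using a0 sub unfolding A_def by blast
        also have "a0 \<le> Sup Ch" using a0 by (rule Sup_upper)
        finally show ?thesis .
      qed
      ultimately show ?thesis using A_def by (auto intro: Sup_upper)
    qed
  qed
  then obtain M where M: "M \<in> A" "\<forall>a \<in> A. M \<le> a \<longrightarrow> a = M" by blast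
  have "lmaximal M" unfolding lmaximal_def
  proof (intro conjI allI impI)
    show "M \<noteq> top" using M A_def by simp
    fix x assume "M \<le> x \<and> x \<noteq> top"
    then show "x = M" using M A_def by auto
  qed
  then show ?thesis using M A_def by auto
qed

lemma part2_step:
  fixes mult :: "'a::complete_lattice \<Rightarrow> 'a \<Rightarrow> 'a"
  assumes M: "mult_lattice mult" and S: "sharp mult" and m: "lmaximal m"
    and loc: "\<And>c. c \<noteq> top \<Longrightarrow> c \<le> m"
    and jx: "join_principal mult x" and xy: "sup x y = m"
  shows "sup (mult x x) y = m \<or> sup (mult x x) y = mult m m"
    and "sup (mult x x) y = m \<Longrightarrow> x \<le> y"
proof -
  interpret ml mult by (rule ml.intro[OF M])
  have mt: "m \<noteq> top" and mx: "\<And>z. m \<le> z \<Longrightarrow> z \<noteq> top \<Longrightarrow> z = m"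
    using m unfolding lmaximal_def by auto
  have ss': "mult m m = sup (sup (mult x x) (mult x y)) (sup (mult y x) (mult y y))"
    unfolding xy[symmetric] distr_sup distr_sup_l by (simp add: ac_simps)
  have "mult m m \<le> sup (mult x x) y"
    unfolding ss' using le_l[of y] le_r[of x y] le_l[of y x] by (simp add: le_supI2)
  then obtain B C where B: "m \<le> B" and C: "m \<le> C" and w: "sup (mult x x) y = mult B C"
    using S unfolding sharp_def by blast
  have wm: "sup (mult x x) y \<le> m" using xy le_l[of x x]
    by (metis le_supI order_trans sup.cobounded1 sup.cobounded2)
  show "sup (mult x x) y = m \<or> sup (mult x x) y = mult m m"
  proof (cases "B = top")
    case True
    then show ?thesis using w C mx wm by (metis antisym unit_l)
  next
    case False
    hence "B = m" using mx B by blast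
    moreover have "C = top \<or> C = m" using mx C by blast
    ultimately show ?thesis using w by auto
  qed
  assume h: "sup (mult x x) y = m"
  have "x \<le> sup (mult x x) y" using h xy by (metis sup.cobounded1)
  hence "top \<le> lcolon mult (sup (mult x x) y) x" using colonI[of top x] by simp
  hence t: "sup x (lcolon mult y x) = top" using jp_eq[OF jx] by (simp add: top_le)
  have "lcolon mult y x = top"
  proof (rule ccontr)
    assume "lcolon mult y x \<noteq> top"
    hence "lcolon mult y x \<le> m" using loc by blast
    moreover have "x \<le> m" using xy by (metis sup.cobounded1)
    ultimately have "sup x (lcolon mult y x) \<le> m" by simp
    then show False using t mt by (simp add: top_le)
  qed
  then show "x \<le> y" using colon_top by blast
qed

lemma part2_set:
  fixes mult :: "'a::complete_lattice \<Rightarrow> 'a \<Rightarrow> 'a"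
  assumes M: "mult_lattice mult" and S: "sharp mult" and m: "lmaximal m"
    and loc: "\<And>c. c \<noteq> top \<Longrightarrow> c \<le> m"
  shows "finite X \<Longrightarrow> card X = k \<Longrightarrow> X \<noteq> {} \<Longrightarrow> (\<forall>x\<in>X. join_principal mult x) \<Longrightarrow> Sup X = m \<Longrightarrow> m \<in> X"
proof (induction k arbitrary: X rule: less_induct)
  case (less k)
  interpret ml mult by (rule ml.intro[OF M])
  have mt: "m \<noteq> top" using m unfolding lmaximal_def by auto
  show ?case
  proof (cases "card X = 1")
    case True
    then obtain x where "X = {x}" using card_1_singletonE by blast
    then show ?thesis using less.prems by simp
  next
    case False
    obtain x where x: "x \<in> X" using less.prems by blast
    have "X - {x} \<noteq> {}"
    proof
      assume "X - {x} = {}"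
      hence "X = {x}" using x by blast
      then show False using False by simp
    qed
    then obtain x' where x': "x' \<in> X" "x' \<noteq> x" by blast
    have rec: "m \<in> X" if z: "z \<in> X" and ne: "X - {z} \<noteq> {}" and
       e: "sup (mult z z) (Sup (X - {z})) = m" for z
    proof -
      have "X = insert z (X - {z})" using z by blast
      hence sx: "Sup X = sup z (Sup (X - {z}))" by (metis Sup_insert)
      have jz: "join_principal mult z" using less.prems(4) z by blast
      have xy: "sup z (Sup (X - {z})) = m" using sx less.prems(5) by simp
      have "z \<le> Sup (X - {z})"
        using part2_step(2)[OF M S m loc jz xy e] .
      hence "Sup (X - {z}) = m" using sx less.prems by (simp add: sup.absorb2)
      moreover have "card (X - {z}) < k" using card_Diff1_less[OF less.prems(1) z] less.prems(2) by simp
      ultimately have "m \<in> X - {z}" using less.IH[of "card (X - {z})" "X - {z}"] less.prems ne by auto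
      then show ?thesis by blast
    qed
    have st: "sup (mult z z) (Sup (X - {z})) = m \<or> sup (mult z z) (Sup (X - {z})) = mult m m"
      if z: "z \<in> X" for z
    proof -
      have "X = insert z (X - {z})" using z by blast
      hence sx: "Sup X = sup z (Sup (X - {z}))" by (metis Sup_insert)
      have jz: "join_principal mult z" using less.prems(4) z by blast
      have xy: "sup z (Sup (X - {z})) = m" using sx less.prems(5) by simp
      show ?thesis using part2_step(1)[OF M S m loc jz xy] .
    qed
    have ne1: "X - {x} \<noteq> {}" using x' by blast
    have ne2: "X - {x'} \<noteq> {}" using x x' by blast
    show ?thesis
    proof (cases "sup (mult x x) (Sup (X - {x})) = m")
      case True then show ?thesis using rec x ne1 by blast
    next
      case F1: False
      show ?thesis
      proof (cases "sup (mult x' x') (Sup (X - {x'})) = m")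
        case True then show ?thesis using rec x' ne2 by blast
      next
        case F2: False
        have e1: "sup (mult x x) (Sup (X - {x})) = mult m m" using st[OF x] F1 by blast
        have e2: "sup (mult x' x') (Sup (X - {x'})) = mult m m" using st[OF x'(1)] F2 by blast
        have "X = (X - {x}) \<union> (X - {x'})" using x' by blast
        hence "Sup X = Sup ((X - {x}) \<union> (X - {x'}))" by simp
        also have "\<dots> = sup (Sup (X - {x})) (Sup (X - {x'}))" by (rule Sup_union_distrib)
        also have "\<dots> \<le> mult m m"
        proof (rule le_supI)
          show "Sup (X - {x}) \<le> mult m m" using e1 by (metis sup.cobounded2)
          show "Sup (X - {x'}) \<le> mult m m" using e2 by (metis sup.cobounded2)
        qed
        finally have "m \<le> mult m m" using less.prems by simp
        hence "mult m m = m" using le_l[of m m] by simp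
        then show ?thesis using e1 F1 by simp
      qed
    qed
  qed
qed

theorem theorem2p5:
  fixes mult :: "'a::complete_lattice \<Rightarrow> 'a \<Rightarrow> 'a"
  assumes "C_lattice mult" and "sharp mult"
  shows "(\<forall>x y. join_principal mult x \<and> join_principal mult y \<and>
            sup (lcolon mult x y) (lcolon mult y x) = sup x y \<longrightarrow> sup x y = top)
       \<and> (\<forall>m (n::nat) (x::nat \<Rightarrow> 'a).
            lmaximal m \<and> (\<forall>m'. lmaximal m' \<longrightarrow> m' = m) \<and> n \<ge> 1 \<and>
            (\<forall>i\<in>{1..n}. join_principal mult (x i)) \<and> m = (SUP i\<in>{1..n}. x i)
            \<longrightarrow> (\<exists>i\<in>{1..n}. m = x i))"
proof (intro conjI allI impI)
  have M: "mult_lattice mult" using assms(1) unfolding C_lattice_def by blast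
  fix x y :: 'a
  assume "join_principal mult x \<and> join_principal mult y \<and>
            sup (lcolon mult x y) (lcolon mult y x) = sup x y"
  then show "sup x y = top" using part1[OF M assms(2)] by blast
next
  have M: "mult_lattice mult" using assms(1) unfolding C_lattice_def by blast
  fix m :: 'a and n :: nat and x :: "nat \<Rightarrow> 'a"
  assume h: "lmaximal m \<and> (\<forall>m'. lmaximal m' \<longrightarrow> m' = m) \<and> n \<ge> 1 \<and>
            (\<forall>i\<in>{1..n}. join_principal mult (x i)) \<and> m = (SUP i\<in>{1..n}. x i)"
  have loc: "c \<le> m" if "c \<noteq> top" for c
    using exists_max[OF assms(1) that] h by blast
  have "m \<in> x ` {1..n}"
    using part2_set[OF M assms(2) _ loc, of "x ` {1..n}" "card (x ` {1..n})"] h by auto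
  then show "\<exists>i\<in>{1..n}. m = x i" by blast
qed

end
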